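(* Assume the continuity assumption holds and let $\lambda^*$ be a minimizer of $\lambda\mapsto\sum_{s\in\{-1,1\}}\mathbb{E}[\max_{k\in[K]}(\pi_s p_k(X,s)-s\lambda_k)\mid S=s]$ over $\mathbb{R}^K$. Then any classifier $g$ satisfying $$g(x,s)\in\arg\max_{k\in[K]}\big(\pi_s p_k(x,s)-s\lambda^*_k\big)\quad\text{for all }(x,s)\in\mathcal{X}\times\{-1,1\}$$ is exactly fair and minimizes $\mathcal{R}$ over $\mathcal{G}_{\rm fair}$, i.e. it is an optimal exactly fair classifier.
   Context: $(X,S,Y)$ is a random triple with distribution $\mathbb{P}$, where $X\in\mathcal{X}\subset\mathbb{R}^d$, $S\in\{-1,1\}$ and $Y\in[K]=\{1,\dots,K\}$. Let $\pi_s=\mathbb{P}(S=s)$, assumed $>0$ for both $s$, and $p_k(x,s)=\mathbb{P}(Y=k\mid X=x,S=s)$. A classifier is a measurable map $g:\mathcal{X}\times\{-1,1\}\to[K]$; the risk is $\mathcal{R}(g)=\mathbb{P}(g(X,S)\neq Y)$. $g$ is exactly fair ($g\in\mathcal{G}_{\rm fair}$) if $\mathbb{P}(g(X,S)=k\mid S=1)=\mathbb{P}(g(X,S)=k\mid S=-1)$ for all $k\in[K]$. Continuity assumption: for all $k\neq j$ in $[K]$ and $s\in\{-1,1\}$, the map $t\mapsto\mathbb{P}(p_k(X,S)-p_j(X,S)\le t\mid S=s)$ is continuous. *)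

theory Defs
  imports "HOL-Probability.Probability"
begin

text \<open>Setup: a probability space M carrying random variables X (features, in a set Xs of real^'d),
S (sensitive attribute, in {-1,1}) and Y (label, in {1..K}).\<close>

definition pi_s :: "'a measure \<Rightarrow> ('a \<Rightarrow> int) \<Rightarrow> int \<Rightarrow> real" where
  "pi_s M S s = measure M {\<omega>\<in>space M. S \<omega> = s}"

definition cprob_S :: "'a measure \<Rightarrow> ('a \<Rightarrow> int) \<Rightarrow> int \<Rightarrow> ('a \<Rightarrow> bool) \<Rightarrow> real" where
  "cprob_S M S s P = measure M {\<omega>\<in>space M. P \<omega> \<and> S \<omega> = s} / pi_s M S s"

definition cexp_S :: "'a measure \<Rightarrow> ('a \<Rightarrow> int) \<Rightarrow> int \<Rightarrow> ('a \<Rightarrow> real) \<Rightarrow> real" where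
  "cexp_S M S s f = (\<integral>\<omega>. indicator {\<omega>\<in>space M. S \<omega> = s} \<omega> * f \<omega> \<partial>M) / pi_s M S s"

text \<open>p is a version of the regression functions p_k(x,s) = P(Y = k | X = x, S = s).\<close>
definition is_cond_prob_version ::
  "'a measure \<Rightarrow> ('a \<Rightarrow> real^'d) \<Rightarrow> ('a \<Rightarrow> int) \<Rightarrow> ('a \<Rightarrow> nat) \<Rightarrow> nat
     \<Rightarrow> (nat \<Rightarrow> real^'d \<Rightarrow> int \<Rightarrow> real) \<Rightarrow> bool" where
  "is_cond_prob_version M X S Y K p \<longleftrightarrow>
     (\<forall>k\<in>{1..K}. \<forall>s\<in>{-1,1}.
        (\<lambda>x. p k x s) \<in> borel_measurable borel \<and>
        (\<forall>x. 0 \<le> p k x s \<and> p k x s \<le> 1) \<and>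
        (\<forall>A\<in>sets borel.
           measure M {\<omega>\<in>space M. Y \<omega> = k \<and> S \<omega> = s \<and> X \<omega> \<in> A}
           = (\<integral>\<omega>. indicator {\<omega>\<in>space M. S \<omega> = s \<and> X \<omega> \<in> A} \<omega> * p k (X \<omega>) s \<partial>M)))"

definition is_classifier :: "(real^'d) set \<Rightarrow> nat \<Rightarrow> (real^'d \<Rightarrow> int \<Rightarrow> nat) \<Rightarrow> bool" where
  "is_classifier Xs K g \<longleftrightarrow>
     (\<forall>s\<in>{-1,1}. (\<lambda>x. g x s) \<in> restrict_space borel Xs \<rightarrow>\<^sub>M count_space UNIV) \<and>
     (\<forall>x\<in>Xs. \<forall>s\<in>{-1,1}. g x s \<in> {1..K})"

definition risk :: "'a measure \<Rightarrow> ('a \<Rightarrow> real^'d) \<Rightarrow> ('a \<Rightarrow> int) \<Rightarrow> ('a \<Rightarrow> nat)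
     \<Rightarrow> (real^'d \<Rightarrow> int \<Rightarrow> nat) \<Rightarrow> real" where
  "risk M X S Y g = measure M {\<omega>\<in>space M. g (X \<omega>) (S \<omega>) \<noteq> Y \<omega>}"

definition exactly_fair :: "'a measure \<Rightarrow> ('a \<Rightarrow> real^'d) \<Rightarrow> ('a \<Rightarrow> int) \<Rightarrow> nat
     \<Rightarrow> (real^'d \<Rightarrow> int \<Rightarrow> nat) \<Rightarrow> bool" where
  "exactly_fair M X S K g \<longleftrightarrow>
     (\<forall>k\<in>{1..K}. cprob_S M S 1 (\<lambda>\<omega>. g (X \<omega>) (S \<omega>) = k)
                = cprob_S M S (-1) (\<lambda>\<omega>. g (X \<omega>) (S \<omega>) = k))"

definition fair_objective :: "'a measure \<Rightarrow> ('a \<Rightarrow> real^'d) \<Rightarrow> ('a \<Rightarrow> int) \<Rightarrow> nat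
     \<Rightarrow> (nat \<Rightarrow> real^'d \<Rightarrow> int \<Rightarrow> real) \<Rightarrow> (nat \<Rightarrow> real) \<Rightarrow> real" where
  "fair_objective M X S K p lam =
     (\<Sum>s\<in>{-1,1::int}. cexp_S M S s
        (\<lambda>\<omega>. Max ((\<lambda>k. pi_s M S s * p k (X \<omega>) s - real_of_int s * lam k) ` {1..K})))"

end

theory Submission
  imports Defs
begin

locale fsetup = prob_space M for M :: "'a measure" +
  fixes X :: "'a \<Rightarrow> real^'d" and S :: "'a \<Rightarrow> int" and Y :: "'a \<Rightarrow> nat"
    and Xs :: "(real^'d) set" and K :: nat and p :: "nat \<Rightarrow> real^'d \<Rightarrow> int \<Rightarrow> real"
  assumes K: "K \<ge> 1"
    and X_meas: "X \<in> borel_measurable M"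
    and S_meas: "S \<in> M \<rightarrow>\<^sub>M count_space UNIV"
    and Y_meas: "Y \<in> M \<rightarrow>\<^sub>M count_space UNIV"
    and X_range: "\<forall>\<omega>\<in>space M. X \<omega> \<in> Xs"
    and S_range: "\<forall>\<omega>\<in>space M. S \<omega> \<in> {-1, 1}"
    and Y_range: "\<forall>\<omega>\<in>space M. Y \<omega> \<in> {1..K}"
    and pi_pos: "\<forall>s\<in>{-1,1}. pi_s M S s > 0"
    and p_version: "is_cond_prob_version M X S Y K p"
begin

definition Aset where "Aset h s k = {\<omega>\<in>space M. h (X \<omega>) (S \<omega>) = k \<and> S \<omega> = s}"

lemma E_sets: "{\<omega>\<in>space M. S \<omega> = s} \<in> sets M"
proof -
  have "{\<omega>\<in>space M. S \<omega> = s} = S -` {s} \<inter> space M" by auto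
  then show ?thesis using measurable_sets[OF S_meas, of "{s}"] by simp
qed

lemma Y_sets: "{\<omega>\<in>space M. Y \<omega> = k} \<in> sets M"
proof -
  have "{\<omega>\<in>space M. Y \<omega> = k} = Y -` {k} \<inter> space M" by auto
  then show ?thesis using measurable_sets[OF Y_meas, of "{k}"] by simp
qed

lemma pX_meas: "k \<in> {1..K} \<Longrightarrow> s \<in> {-1,1} \<Longrightarrow> (\<lambda>\<omega>. p k (X \<omega>) s) \<in> borel_measurable M"
  using p_version unfolding is_cond_prob_version_def
  by (auto intro: measurable_compose[OF X_meas])

lemma p_bnd: "k \<in> {1..K} \<Longrightarrow> s \<in> {-1,1} \<Longrightarrow> 0 \<le> p k x s \<and> p k x s \<le> 1"
  using p_version unfolding is_cond_prob_version_def by blast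

lemma X_restr: "X \<in> M \<rightarrow>\<^sub>M restrict_space borel Xs"
  by (rule measurable_restrict_space2) (use X_range X_meas in auto)

lemma cls_meas: "is_classifier Xs K h \<Longrightarrow> s \<in> {-1,1} \<Longrightarrow> (\<lambda>\<omega>. h (X \<omega>) s) \<in> M \<rightarrow>\<^sub>M count_space UNIV"
  unfolding is_classifier_def by (auto intro: measurable_compose[OF X_restr])

lemma cls_range: "is_classifier Xs K h \<Longrightarrow> s \<in> {-1,1} \<Longrightarrow> \<omega> \<in> space M \<Longrightarrow> h (X \<omega>) s \<in> {1..K}"
  unfolding is_classifier_def using X_range by blast

lemma cls_sets: "is_classifier Xs K h \<Longrightarrow> s \<in> {-1,1} \<Longrightarrow> {\<omega>\<in>space M. h (X \<omega>) s = k} \<in> sets M"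
proof -
  assume h: "is_classifier Xs K h" and s: "s \<in> {-1,1}"
  have "{\<omega>\<in>space M. h (X \<omega>) s = k} = (\<lambda>\<omega>. h (X \<omega>) s) -` {k} \<inter> space M" by auto
  then show ?thesis using measurable_sets[OF cls_meas[OF h s], of "{k}"] by simp
qed

lemma Aset_eq: "Aset h s k = {\<omega>\<in>space M. h (X \<omega>) s = k} \<inter> {\<omega>\<in>space M. S \<omega> = s}"
  unfolding Aset_def by auto

lemma Aset_sets: "is_classifier Xs K h \<Longrightarrow> s \<in> {-1,1} \<Longrightarrow> Aset h s k \<in> sets M"
  unfolding Aset_eq using cls_sets E_sets by blast

lemma bnd_integrable:
  fixes f :: "'a \<Rightarrow> real"
  assumes "f \<in> borel_measurable M" "\<And>\<omega>. \<omega> \<in> space M \<Longrightarrow> \<bar>f \<omega>\<bar> \<le> B"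
  shows "integrable M f"
  by (rule integrable_const_bound[where B=B]) (use assms in \<open>auto intro: AE_I2\<close>)

lemma ind_integrable:
  fixes c :: "'a \<Rightarrow> real"
  assumes "A \<in> sets M" "c \<in> borel_measurable M" "\<And>\<omega>. \<omega> \<in> space M \<Longrightarrow> \<bar>c \<omega>\<bar> \<le> B"
  shows "integrable M (\<lambda>\<omega>. indicator A \<omega> * c \<omega>)"
proof (rule bnd_integrable[where B=B])
  show "(\<lambda>\<omega>. indicator A \<omega> * c \<omega>) \<in> borel_measurable M"
    using assms by (intro borel_measurable_times borel_measurable_indicator) auto
  fix \<omega> assume w: "\<omega> \<in> space M"
  show "\<bar>indicator A \<omega> * c \<omega>\<bar> \<le> B" using assms(3)[OF w] by (auto simp: indicator_def)
qed

lemma int_cls: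
  fixes c :: "nat \<Rightarrow> 'a \<Rightarrow> real"
  assumes h: "is_classifier Xs K h" and s: "s \<in> {-1,1}"
    and cm: "\<And>k. k \<in> {1..K} \<Longrightarrow> c k \<in> borel_measurable M"
    and cb: "\<And>k \<omega>. k \<in> {1..K} \<Longrightarrow> \<omega> \<in> space M \<Longrightarrow> \<bar>c k \<omega>\<bar> \<le> B"
  shows "(\<integral>\<omega>. indicator {\<omega>\<in>space M. S \<omega> = s} \<omega> * c (h (X \<omega>) s) \<omega> \<partial>M)
       = (\<Sum>k\<in>{1..K}. \<integral>\<omega>. indicator (Aset h s k) \<omega> * c k \<omega> \<partial>M)"
proof -
  have "(\<integral>\<omega>. indicator {\<omega>\<in>space M. S \<omega> = s} \<omega> * c (h (X \<omega>) s) \<omega> \<partial>M)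
      = (\<integral>\<omega>. (\<Sum>k\<in>{1..K}. indicator (Aset h s k) \<omega> * c k \<omega>) \<partial>M)"
  proof (rule Bochner_Integration.integral_cong[OF refl])
    fix \<omega> assume w: "\<omega> \<in> space M"
    have hr: "h (X \<omega>) s \<in> {1..K}" using cls_range[OF h s w] .
    have "(\<Sum>k\<in>{1..K}. indicator (Aset h s k) \<omega> * c k \<omega>)
        = (\<Sum>k\<in>{1..K}. if k = h (X \<omega>) s then (if S \<omega> = s then c k \<omega> else 0) else 0)"
      by (rule sum.cong) (auto simp: Aset_def indicator_def w)
    also have "\<dots> = indicator {\<omega>\<in>space M. S \<omega> = s} \<omega> * c (h (X \<omega>) s) \<omega>"
      using hr by (simp add: sum.delta indicator_def w)
    finally show "indicator {\<omega>\<in>space M. S \<omega> = s} \<omega> * c (h (X \<omega>) s) \<omega>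
        = (\<Sum>k\<in>{1..K}. indicator (Aset h s k) \<omega> * c k \<omega>)" by simp
  qed
  also have "\<dots> = (\<Sum>k\<in>{1..K}. \<integral>\<omega>. indicator (Aset h s k) \<omega> * c k \<omega> \<partial>M)"
    by (rule Bochner_Integration.integral_sum[where f="\<lambda>k \<omega>. indicator (Aset h s k) \<omega> * c k \<omega>"],
        rule ind_integrable[where B=B], auto intro: cm cb simp: Aset_sets[OF h s])
  finally show ?thesis .
qed

lemma int_const:
  assumes h: "is_classifier Xs K h" and s: "s \<in> {-1,1}"
  shows "(\<integral>\<omega>. indicator (Aset h s k) \<omega> * c \<partial>M) = c * measure M (Aset h s k)"
proof -
  have "Aset h s k \<inter> space M = Aset h s k" unfolding Aset_def by auto
  then show ?thesis by (simp add: mult.commute)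
qed

lemma int_version:
  assumes h: "is_classifier Xs K h" and s: "s \<in> {-1,1}" and k: "k \<in> {1..K}"
  shows "(\<integral>\<omega>. indicator (Aset h s k) \<omega> * p k (X \<omega>) s \<partial>M)
       = measure M {\<omega>\<in>space M. Y \<omega> = k \<and> S \<omega> = s \<and> h (X \<omega>) s = k}"
proof -
  have "(\<lambda>x. h x s) -` {k} \<inter> space (restrict_space borel Xs) \<in> sets (restrict_space borel Xs)"
    using h s unfolding is_classifier_def by (intro measurable_sets) auto
  then obtain B where B: "B \<in> sets borel" "(\<lambda>x. h x s) -` {k} \<inter> Xs = Xs \<inter> B"
    by (auto simp: sets_restrict_space space_restrict_space)
  have eqA: "Aset h s k = {\<omega>\<in>space M. S \<omega> = s \<and> X \<omega> \<in> B}"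
  proof -
    { fix \<omega> assume w: "\<omega> \<in> space M"
      then have "X \<omega> \<in> Xs" using X_range by auto
      then have "h (X \<omega>) s = k \<longleftrightarrow> X \<omega> \<in> B" using B(2) by blast }
    then show ?thesis unfolding Aset_def by auto
  qed
  have eqY: "{\<omega>\<in>space M. Y \<omega> = k \<and> S \<omega> = s \<and> h (X \<omega>) s = k} = {\<omega>\<in>space M. Y \<omega> = k \<and> S \<omega> = s \<and> X \<omega> \<in> B}"
  proof -
    { fix \<omega> assume w: "\<omega> \<in> space M"
      then have "X \<omega> \<in> Xs" using X_range by auto
      then have "h (X \<omega>) s = k \<longleftrightarrow> X \<omega> \<in> B" using B(2) by blast }
    then show ?thesis by auto
  qed
  show ?thesis using p_version k s B(1) unfolding is_cond_prob_version_def eqA eqY by auto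
qed


lemma cls_pt:
  fixes c :: "nat \<Rightarrow> 'a \<Rightarrow> real"
  assumes h: "is_classifier Xs K h" and s: "s \<in> {-1,1}" and w: "\<omega> \<in> space M"
  shows "indicator {\<omega>\<in>space M. S \<omega> = s} \<omega> * c (h (X \<omega>) s) \<omega>
       = (\<Sum>k\<in>{1..K}. indicator (Aset h s k) \<omega> * c k \<omega>)"
proof -
  have hr: "h (X \<omega>) s \<in> {1..K}" using cls_range[OF h s w] .
  have "(\<Sum>k\<in>{1..K}. indicator (Aset h s k) \<omega> * c k \<omega>)
      = (\<Sum>k\<in>{1..K}. if k = h (X \<omega>) s then (if S \<omega> = s then c k \<omega> else 0) else 0)"
    by (rule sum.cong) (auto simp: Aset_def indicator_def w)
  also have "\<dots> = indicator {\<omega>\<in>space M. S \<omega> = s} \<omega> * c (h (X \<omega>) s) \<omega>"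
    using hr by (simp add: sum.delta indicator_def w)
  finally show ?thesis by simp
qed

lemma cls_integrable:
  fixes c :: "nat \<Rightarrow> 'a \<Rightarrow> real"
  assumes h: "is_classifier Xs K h" and s: "s \<in> {-1,1}"
    and cm: "\<And>k. k \<in> {1..K} \<Longrightarrow> c k \<in> borel_measurable M"
    and cb: "\<And>k \<omega>. k \<in> {1..K} \<Longrightarrow> \<omega> \<in> space M \<Longrightarrow> \<bar>c k \<omega>\<bar> \<le> B"
  shows "integrable M (\<lambda>\<omega>. indicator {\<omega>\<in>space M. S \<omega> = s} \<omega> * c (h (X \<omega>) s) \<omega>)"
proof -
  have i: "integrable M (\<lambda>\<omega>. \<Sum>k\<in>{1..K}. indicator (Aset h s k) \<omega> * c k \<omega>)"
    by (rule Bochner_Integration.integrable_sum[where f="\<lambda>k \<omega>. indicator (Aset h s k) \<omega> * c k \<omega>"], rule ind_integrable[where B=B], auto intro: cm cb simp: Aset_sets[OF h s])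
  then show ?thesis
  proof -
    have eq: "\<And>\<omega>. \<omega> \<in> space M \<Longrightarrow> (\<Sum>k\<in>{1..K}. indicator (Aset h s k) \<omega> * c k \<omega>)
       = indicator {\<omega>\<in>space M. S \<omega> = s} \<omega> * c (h (X \<omega>) s) \<omega>"
      using cls_pt[OF h s] by simp
    show ?thesis using Bochner_Integration.integrable_cong[of M M "\<lambda>\<omega>. \<Sum>k\<in>{1..K}. indicator (Aset h s k) \<omega> * c k \<omega>"
        "\<lambda>\<omega>. indicator {\<omega>\<in>space M. S \<omega> = s} \<omega> * c (h (X \<omega>) s) \<omega>"] eq i by blast
  qed
qed

definition Qv where "Qv h s k = measure M (Aset h s k)"
definition Rv where "Rv h s k = measure M {\<omega>\<in>space M. Y \<omega> = k \<and> S \<omega> = s \<and> h (X \<omega>) s = k}"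

lemma ind_int: "A \<in> sets M \<Longrightarrow> integrable M (indicator A :: 'a \<Rightarrow> real)"
  by (rule bnd_integrable[where B=1]) (auto simp: indicator_def)

lemma Rset_sets: "is_classifier Xs K h \<Longrightarrow> s \<in> {-1,1} \<Longrightarrow>
   {\<omega>\<in>space M. Y \<omega> = k \<and> S \<omega> = s \<and> h (X \<omega>) s = k} \<in> sets M"
proof -
  assume h: "is_classifier Xs K h" and s: "s \<in> {-1,1}"
  have "{\<omega>\<in>space M. Y \<omega> = k \<and> S \<omega> = s \<and> h (X \<omega>) s = k}
     = {\<omega>\<in>space M. Y \<omega> = k} \<inter> {\<omega>\<in>space M. S \<omega> = s} \<inter> {\<omega>\<in>space M. h (X \<omega>) s = k}" by auto
  then show ?thesis using Y_sets E_sets cls_sets[OF h s] by auto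
qed

lemma correct_pt:
  assumes h: "is_classifier Xs K h" and w: "\<omega> \<in> space M"
  shows "(indicator {\<omega>\<in>space M. h (X \<omega>) (S \<omega>) = Y \<omega>} \<omega> :: real)
     = (\<Sum>k\<in>{1..K}. indicator {\<omega>\<in>space M. Y \<omega> = k \<and> S \<omega> = -1 \<and> h (X \<omega>) (-1) = k} \<omega>)
     + (\<Sum>k\<in>{1..K}. indicator {\<omega>\<in>space M. Y \<omega> = k \<and> S \<omega> = 1 \<and> h (X \<omega>) 1 = k} \<omega>)" (is "_ = ?A + ?B")
proof -
  have yr: "Y \<omega> \<in> {1..K}" using Y_range w by auto
  have "?A = (\<Sum>k\<in>{1..K}. if k = Y \<omega> then (if S \<omega> = -1 \<and> h (X \<omega>) (-1) = Y \<omega> then 1 else 0) else 0)"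
    by (rule sum.cong) (auto simp: indicator_def w)
  also have "\<dots> = (if S \<omega> = -1 \<and> h (X \<omega>) (-1) = Y \<omega> then 1 else 0)" using yr by (simp add: sum.delta)
  finally have A: "?A = \<dots>" .
  have "?B = (\<Sum>k\<in>{1..K}. if k = Y \<omega> then (if S \<omega> = 1 \<and> h (X \<omega>) 1 = Y \<omega> then 1 else 0) else 0)"
    by (rule sum.cong) (auto simp: indicator_def w)
  also have "\<dots> = (if S \<omega> = 1 \<and> h (X \<omega>) 1 = Y \<omega> then 1 else 0)" using yr by (simp add: sum.delta)
  finally have B: "?B = \<dots>" .
  have "S \<omega> = -1 \<or> S \<omega> = 1" using S_range w by auto
  then show ?thesis unfolding A B by (auto simp: indicator_def w)
qed

lemma correct_measure:
  assumes h: "is_classifier Xs K h"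
  shows "measure M {\<omega>\<in>space M. h (X \<omega>) (S \<omega>) = Y \<omega>} = (\<Sum>k\<in>{1..K}. Rv h (-1) k) + (\<Sum>k\<in>{1..K}. Rv h 1 k)"
    and "risk M X S Y h = 1 - ((\<Sum>k\<in>{1..K}. Rv h (-1) k) + (\<Sum>k\<in>{1..K}. Rv h 1 k))"
proof -
  let ?A = "\<lambda>\<omega>. (\<Sum>k\<in>{1..K}. indicator {\<omega>\<in>space M. Y \<omega> = k \<and> S \<omega> = -1 \<and> h (X \<omega>) (-1) = k} \<omega>) :: real"
  let ?B = "\<lambda>\<omega>. (\<Sum>k\<in>{1..K}. indicator {\<omega>\<in>space M. Y \<omega> = k \<and> S \<omega> = 1 \<and> h (X \<omega>) 1 = k} \<omega>) :: real"
  have s1: "(-1::int) \<in> {-1,1}" and s2: "(1::int) \<in> {-1,1}" by auto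
  have iA: "integrable M ?A"
    by (rule Bochner_Integration.integrable_sum[where f="\<lambda>k. indicator {\<omega>\<in>space M. Y \<omega> = k \<and> S \<omega> = -1 \<and> h (X \<omega>) (-1) = k}"], rule ind_int, rule Rset_sets[OF h s1])
  have iB: "integrable M ?B"
    by (rule Bochner_Integration.integrable_sum[where f="\<lambda>k. indicator {\<omega>\<in>space M. Y \<omega> = k \<and> S \<omega> = 1 \<and> h (X \<omega>) 1 = k}"], rule ind_int, rule Rset_sets[OF h s2])
  have IA: "integral\<^sup>L M ?A = (\<Sum>k\<in>{1..K}. Rv h (-1) k)"
    by (subst Bochner_Integration.integral_sum, rule ind_int, rule Rset_sets[OF h s1])
       (auto simp: Rv_def intro!: sum.cong arg_cong[where f="measure M"])
  have IB: "integral\<^sup>L M ?B = (\<Sum>k\<in>{1..K}. Rv h 1 k)"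
    by (subst Bochner_Integration.integral_sum, rule ind_int, rule Rset_sets[OF h s2])
       (auto simp: Rv_def intro!: sum.cong arg_cong[where f="measure M"])
  have "measure M {\<omega>\<in>space M. h (X \<omega>) (S \<omega>) = Y \<omega>} = integral\<^sup>L M (indicator {\<omega>\<in>space M. h (X \<omega>) (S \<omega>) = Y \<omega>})"
    by (simp add: Int_absorb2)
  also have "\<dots> = integral\<^sup>L M (\<lambda>\<omega>. ?A \<omega> + ?B \<omega>)"
    by (rule Bochner_Integration.integral_cong[OF refl]) (rule correct_pt[OF h])
  also have "\<dots> = (\<Sum>k\<in>{1..K}. Rv h (-1) k) + (\<Sum>k\<in>{1..K}. Rv h 1 k)"
    using iA iB IA IB by simp
  finally show "measure M {\<omega>\<in>space M. h (X \<omega>) (S \<omega>) = Y \<omega>} = (\<Sum>k\<in>{1..K}. Rv h (-1) k) + (\<Sum>k\<in>{1..K}. Rv h 1 k)" .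
  have "risk M X S Y h = integral\<^sup>L M (indicator {\<omega>\<in>space M. h (X \<omega>) (S \<omega>) \<noteq> Y \<omega>})"
    by (simp add: risk_def Int_absorb2)
  also have "\<dots> = integral\<^sup>L M (\<lambda>\<omega>. 1 - (?A \<omega> + ?B \<omega>))"
  proof (rule Bochner_Integration.integral_cong[OF refl])
    fix \<omega> assume w: "\<omega> \<in> space M"
    have "indicator {\<omega>\<in>space M. h (X \<omega>) (S \<omega>) \<noteq> Y \<omega>} \<omega>
        = (1::real) - indicator {\<omega>\<in>space M. h (X \<omega>) (S \<omega>) = Y \<omega>} \<omega>"
      using w by (simp add: indicator_def)
    then show "indicator {\<omega>\<in>space M. h (X \<omega>) (S \<omega>) \<noteq> Y \<omega>} \<omega> = 1 - (?A \<omega> + ?B \<omega>)"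
      using correct_pt[OF h w] by simp
  qed
  also have "\<dots> = 1 - ((\<Sum>k\<in>{1..K}. Rv h (-1) k) + (\<Sum>k\<in>{1..K}. Rv h 1 k))"
    using iA iB IA IB prob_space by (simp add: Bochner_Integration.integral_diff)
  finally show "risk M X S Y h = 1 - ((\<Sum>k\<in>{1..K}. Rv h (-1) k) + (\<Sum>k\<in>{1..K}. Rv h 1 k))" .
qed


lemma pi_le1: "pi_s M S s \<le> 1"
  unfolding pi_s_def by (rule prob_le_1)

lemma pi_pos': "s \<in> {-1,1} \<Longrightarrow> pi_s M S s > 0"
  using pi_pos by blast

lemma a_meas: "k \<in> {1..K} \<Longrightarrow> s \<in> {-1,1} \<Longrightarrow>
   (\<lambda>\<omega>. pi_s M S s * p k (X \<omega>) s - real_of_int s * lam k) \<in> borel_measurable M"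
  using pX_meas by (intro borel_measurable_diff borel_measurable_times borel_measurable_const) auto

lemma a_bnd:
  assumes k: "k \<in> {1..K}" and s: "s \<in> {-1,1}"
  shows "\<bar>pi_s M S s * p k x s - real_of_int s * lam k\<bar> \<le> 1 + (\<Sum>j\<in>{1..K}. \<bar>lam j\<bar>)"
proof -
  have p: "0 \<le> p k x s" "p k x s \<le> 1" using p_bnd[OF k s] by auto
  have pi: "0 \<le> pi_s M S s" "pi_s M S s \<le> 1" using pi_pos'[OF s] pi_le1 by auto
  have "\<bar>pi_s M S s * p k x s\<bar> \<le> 1" using p pi by (simp add: abs_mult mult_le_one)
  moreover have "\<bar>real_of_int s * lam k\<bar> = \<bar>lam k\<bar>" using s by (auto simp: abs_mult)
  moreover have "\<bar>lam k\<bar> \<le> (\<Sum>j\<in>{1..K}. \<bar>lam j\<bar>)"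
    using k by (intro member_le_sum) auto
  ultimately show ?thesis by linarith
qed

lemma obj_cls:
  assumes h: "is_classifier Xs K h" and s: "s \<in> {-1,1}"
  shows "cexp_S M S s (\<lambda>\<omega>. pi_s M S s * p (h (X \<omega>) s) (X \<omega>) s - real_of_int s * lam (h (X \<omega>) s))
    = (\<Sum>k\<in>{1..K}. Rv h s k) - real_of_int s * (\<Sum>k\<in>{1..K}. lam k * Qv h s k) / pi_s M S s"
proof -
  let ?pi = "pi_s M S s"
  have trm: "(\<integral>\<omega>. indicator (Aset h s k) \<omega> * (?pi * p k (X \<omega>) s - real_of_int s * lam k) \<partial>M)
      = ?pi * Rv h s k - real_of_int s * (lam k * Qv h s k)" if k: "k \<in> {1..K}" for k
  proof -
    have "(\<integral>\<omega>. indicator (Aset h s k) \<omega> * (?pi * p k (X \<omega>) s - real_of_int s * lam k) \<partial>M)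
       = (\<integral>\<omega>. ?pi * (indicator (Aset h s k) \<omega> * p k (X \<omega>) s) - (real_of_int s * lam k) * indicator (Aset h s k) \<omega> \<partial>M)"
      by (rule Bochner_Integration.integral_cong) (auto simp: algebra_simps)
    also have "\<dots> = ?pi * (\<integral>\<omega>. indicator (Aset h s k) \<omega> * p k (X \<omega>) s \<partial>M)
        - (real_of_int s * lam k) * (\<integral>\<omega>. indicator (Aset h s k) \<omega> \<partial>M)"
    proof -
      have i1: "integrable M (\<lambda>\<omega>. indicator (Aset h s k) \<omega> * p k (X \<omega>) s)"
        by (rule ind_integrable[where B=1]) (use Aset_sets[OF h s] pX_meas[OF k s] p_bnd[OF k s] in auto)
      have i2: "integrable M (indicator (Aset h s k) :: 'a \<Rightarrow> real)" by (rule ind_int[OF Aset_sets[OF h s]])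
      show ?thesis using i1 i2 by simp
    qed
    also have "\<dots> = ?pi * Rv h s k - real_of_int s * (lam k * Qv h s k)"
    proof -
      have "Aset h s k \<inter> space M = Aset h s k" unfolding Aset_def by auto
      then show ?thesis using int_version[OF h s k] by (simp add: Rv_def Qv_def)
    qed
    finally show ?thesis .
  qed
  have "(\<integral>\<omega>. indicator {\<omega>\<in>space M. S \<omega> = s} \<omega> * (?pi * p (h (X \<omega>) s) (X \<omega>) s - real_of_int s * lam (h (X \<omega>) s)) \<partial>M)
     = (\<Sum>k\<in>{1..K}. \<integral>\<omega>. indicator (Aset h s k) \<omega> * (?pi * p k (X \<omega>) s - real_of_int s * lam k) \<partial>M)"
    using int_cls[OF h s, of "\<lambda>k \<omega>. ?pi * p k (X \<omega>) s - real_of_int s * lam k" "1 + (\<Sum>j\<in>{1..K}. \<bar>lam j\<bar>)"]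
      a_meas[OF _ s] a_bnd[OF _ s] by simp
  also have "\<dots> = (\<Sum>k\<in>{1..K}. ?pi * Rv h s k - real_of_int s * (lam k * Qv h s k))"
    using trm by (rule sum.cong[OF refl])
  also have "\<dots> = ?pi * (\<Sum>k\<in>{1..K}. Rv h s k) - real_of_int s * (\<Sum>k\<in>{1..K}. lam k * Qv h s k)"
    by (simp add: sum_subtractf sum_distrib_left)
  finally have I: "(\<integral>\<omega>. indicator {\<omega>\<in>space M. S \<omega> = s} \<omega> * (?pi * p (h (X \<omega>) s) (X \<omega>) s - real_of_int s * lam (h (X \<omega>) s)) \<partial>M)
     = ?pi * (\<Sum>k\<in>{1..K}. Rv h s k) - real_of_int s * (\<Sum>k\<in>{1..K}. lam k * Qv h s k)" .
  have "?pi > 0" using pi_pos'[OF s] .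
  then show ?thesis unfolding cexp_S_def I by (simp add: field_simps)
qed

lemma fair_value:
  assumes h: "is_classifier Xs K h" and f: "exactly_fair M X S K h"
  shows "(\<Sum>s\<in>{-1,1::int}. cexp_S M S s (\<lambda>\<omega>. pi_s M S s * p (h (X \<omega>) s) (X \<omega>) s - real_of_int s * lam (h (X \<omega>) s)))
     = 1 - risk M X S Y h"
proof -
  have s1: "(-1::int) \<in> {-1,1}" and s2: "(1::int) \<in> {-1,1}" by auto
  have fq: "Qv h 1 k / pi_s M S 1 = Qv h (-1) k / pi_s M S (-1)" if "k \<in> {1..K}" for k
    using f that unfolding exactly_fair_def cprob_S_def Qv_def Aset_def by blast
  have "(\<Sum>k\<in>{1..K}. lam k * Qv h 1 k) / pi_s M S 1 = (\<Sum>k\<in>{1..K}. lam k * (Qv h 1 k / pi_s M S 1))"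
    by (simp add: sum_divide_distrib)
  also have "\<dots> = (\<Sum>k\<in>{1..K}. lam k * (Qv h (-1) k / pi_s M S (-1)))"
    using fq by (intro sum.cong) auto
  also have "\<dots> = (\<Sum>k\<in>{1..K}. lam k * Qv h (-1) k) / pi_s M S (-1)"
    by (simp add: sum_divide_distrib)
  finally have e: "(\<Sum>k\<in>{1..K}. lam k * Qv h 1 k) / pi_s M S 1 = (\<Sum>k\<in>{1..K}. lam k * Qv h (-1) k) / pi_s M S (-1)" .
  show ?thesis
    using obj_cls[OF h s1, of lam] obj_cls[OF h s2, of lam] correct_measure(2)[OF h] e by simp
qed

lemma cexp_mono:
  assumes h: "is_classifier Xs K h" and g: "is_classifier Xs K g" and s: "s \<in> {-1,1}"
    and am: "\<forall>x\<in>Xs. \<forall>s\<in>{-1,1}. \<forall>k\<in>{1..K}.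
        pi_s M S s * p k x s - real_of_int s * lam k
          \<le> pi_s M S s * p (g x s) x s - real_of_int s * lam (g x s)"
  shows "cexp_S M S s (\<lambda>\<omega>. pi_s M S s * p (h (X \<omega>) s) (X \<omega>) s - real_of_int s * lam (h (X \<omega>) s))
     \<le> cexp_S M S s (\<lambda>\<omega>. pi_s M S s * p (g (X \<omega>) s) (X \<omega>) s - real_of_int s * lam (g (X \<omega>) s))"
  unfolding cexp_S_def
proof (rule divide_right_mono)
  show "0 \<le> pi_s M S s" using pi_pos'[OF s] by simp
  show "(\<integral>\<omega>. indicator {\<omega>\<in>space M. S \<omega> = s} \<omega> * (pi_s M S s * p (h (X \<omega>) s) (X \<omega>) s - real_of_int s * lam (h (X \<omega>) s)) \<partial>M)
    \<le> (\<integral>\<omega>. indicator {\<omega>\<in>space M. S \<omega> = s} \<omega> * (pi_s M S s * p (g (X \<omega>) s) (X \<omega>) s - real_of_int s * lam (g (X \<omega>) s)) \<partial>M)"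
  proof (rule integral_mono)
    show "integrable M (\<lambda>\<omega>. indicator {\<omega>\<in>space M. S \<omega> = s} \<omega> * (pi_s M S s * p (h (X \<omega>) s) (X \<omega>) s - real_of_int s * lam (h (X \<omega>) s)))"
      using cls_integrable[OF h s, of "\<lambda>k \<omega>. pi_s M S s * p k (X \<omega>) s - real_of_int s * lam k" "1 + (\<Sum>j\<in>{1..K}. \<bar>lam j\<bar>)"]
      a_meas[OF _ s] a_bnd[OF _ s] by simp
    show "integrable M (\<lambda>\<omega>. indicator {\<omega>\<in>space M. S \<omega> = s} \<omega> * (pi_s M S s * p (g (X \<omega>) s) (X \<omega>) s - real_of_int s * lam (g (X \<omega>) s)))"
      using cls_integrable[OF g s, of "\<lambda>k \<omega>. pi_s M S s * p k (X \<omega>) s - real_of_int s * lam k" "1 + (\<Sum>j\<in>{1..K}. \<bar>lam j\<bar>)"]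
      a_meas[OF _ s] a_bnd[OF _ s] by simp
    fix \<omega> assume w: "\<omega> \<in> space M"
    have "X \<omega> \<in> Xs" using X_range w by auto
    moreover have "h (X \<omega>) s \<in> {1..K}" using cls_range[OF h s w] .
    ultimately have "pi_s M S s * p (h (X \<omega>) s) (X \<omega>) s - real_of_int s * lam (h (X \<omega>) s)
       \<le> pi_s M S s * p (g (X \<omega>) s) (X \<omega>) s - real_of_int s * lam (g (X \<omega>) s)"
      using am s by blast
    then show "indicator {\<omega>\<in>space M. S \<omega> = s} \<omega> * (pi_s M S s * p (h (X \<omega>) s) (X \<omega>) s - real_of_int s * lam (h (X \<omega>) s))
      \<le> indicator {\<omega>\<in>space M. S \<omega> = s} \<omega> * (pi_s M S s * p (g (X \<omega>) s) (X \<omega>) s - real_of_int s * lam (g (X \<omega>) s))"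
      by (auto simp: indicator_def)
  qed
qed

lemma Max_obj:
  assumes g: "is_classifier Xs K g" and s: "s \<in> {-1,1}"
    and am: "\<forall>x\<in>Xs. \<forall>s\<in>{-1,1}. \<forall>k\<in>{1..K}.
        pi_s M S s * p k x s - real_of_int s * lam k
          \<le> pi_s M S s * p (g x s) x s - real_of_int s * lam (g x s)"
  shows "cexp_S M S s (\<lambda>\<omega>. Max ((\<lambda>k. pi_s M S s * p k (X \<omega>) s - real_of_int s * lam k) ` {1..K}))
     = cexp_S M S s (\<lambda>\<omega>. pi_s M S s * p (g (X \<omega>) s) (X \<omega>) s - real_of_int s * lam (g (X \<omega>) s))"
  unfolding cexp_S_def
proof (rule arg_cong[where f="\<lambda>x. x / pi_s M S s"], rule Bochner_Integration.integral_cong[OF refl])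
  fix \<omega> assume w: "\<omega> \<in> space M"
  have x: "X \<omega> \<in> Xs" using X_range w by auto
  have gr: "g (X \<omega>) s \<in> {1..K}" using cls_range[OF g s w] .
  have "Max ((\<lambda>k. pi_s M S s * p k (X \<omega>) s - real_of_int s * lam k) ` {1..K})
      = pi_s M S s * p (g (X \<omega>) s) (X \<omega>) s - real_of_int s * lam (g (X \<omega>) s)"
    by (rule Max_eqI) (use am x s gr in auto)
  then show "indicator {\<omega>\<in>space M. S \<omega> = s} \<omega> * Max ((\<lambda>k. pi_s M S s * p k (X \<omega>) s - real_of_int s * lam k) ` {1..K})
     = indicator {\<omega>\<in>space M. S \<omega> = s} \<omega> * (pi_s M S s * p (g (X \<omega>) s) (X \<omega>) s - real_of_int s * lam (g (X \<omega>) s))"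
    by simp
qed

lemma optimal:
  assumes g: "is_classifier Xs K g" and fg: "exactly_fair M X S K g"
    and am: "\<forall>x\<in>Xs. \<forall>s\<in>{-1,1}. \<forall>k\<in>{1..K}.
        pi_s M S s * p k x s - real_of_int s * lam k
          \<le> pi_s M S s * p (g x s) x s - real_of_int s * lam (g x s)"
    and h: "is_classifier Xs K h" and fh: "exactly_fair M X S K h"
  shows "risk M X S Y g \<le> risk M X S Y h"
proof -
  have s1: "(-1::int) \<in> {-1,1}" and s2: "(1::int) \<in> {-1,1}" by auto
  have "1 - risk M X S Y h \<le> 1 - risk M X S Y g"
    unfolding fair_value[OF h fh, of lam, symmetric] fair_value[OF g fg, of lam, symmetric]
    using cexp_mono[OF h g s1 am] cexp_mono[OF h g s2 am] by simp
  then show ?thesis by simp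
qed


lemma le_sets: fixes f :: "'a \<Rightarrow> real" shows "f \<in> borel_measurable M \<Longrightarrow> {\<omega>\<in>space M. f \<omega> \<le> t \<and> S \<omega> = s} \<in> sets M"
proof -
  assume f: "f \<in> borel_measurable M"
  have "{\<omega>\<in>space M. f \<omega> \<le> t \<and> S \<omega> = s} = {w\<in>space M. f w \<le> (\<lambda>_. t) w} \<inter> {\<omega>\<in>space M. S \<omega> = s}" by auto
  then show ?thesis using borel_measurable_le[OF f borel_measurable_const] E_sets by auto
qed

lemma lt_sets: fixes f :: "'a \<Rightarrow> real" shows "f \<in> borel_measurable M \<Longrightarrow> {\<omega>\<in>space M. f \<omega> < t \<and> S \<omega> = s} \<in> sets M"
proof -
  assume f: "f \<in> borel_measurable M"
  have "{\<omega>\<in>space M. f \<omega> < t \<and> S \<omega> = s} = {w\<in>space M. f w < (\<lambda>_. t) w} \<inter> {\<omega>\<in>space M. S \<omega> = s}" by auto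
  then show ?thesis using borel_measurable_less[OF f borel_measurable_const] E_sets by auto
qed

lemma abslt_sets: fixes f :: "'a \<Rightarrow> real" shows "f \<in> borel_measurable M \<Longrightarrow> {\<omega>\<in>space M. S \<omega> = s \<and> \<bar>f \<omega>\<bar> < r} \<in> sets M"
proof -
  assume f: "f \<in> borel_measurable M"
  have "{\<omega>\<in>space M. S \<omega> = s \<and> \<bar>f \<omega>\<bar> < r} = {\<omega>\<in>space M. \<bar>f \<omega>\<bar> < r \<and> S \<omega> = s}" by auto
  then show ?thesis using lt_sets[OF borel_measurable_abs[OF f]] by simp
qed

lemma cont_atom:
  fixes f :: "'a \<Rightarrow> real"
  assumes f: "f \<in> borel_measurable M"
    and cont: "continuous_on UNIV (\<lambda>t. measure M {\<omega>\<in>space M. f \<omega> \<le> t \<and> S \<omega> = s})"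
  shows "measure M {\<omega>\<in>space M. f \<omega> = c \<and> S \<omega> = s} = 0"
proof -
  define G where "G t = measure M {\<omega>\<in>space M. f \<omega> \<le> t \<and> S \<omega> = s}" for t
  define A where "A n = {\<omega>\<in>space M. f \<omega> \<le> c - inverse (real (Suc n)) \<and> S \<omega> = s}" for n
  have Asets: "range A \<subseteq> sets M" unfolding A_def using le_sets[OF f] by auto
  have inc: "incseq A"
  proof (rule incseq_SucI)
    fix n
    have "inverse (real (Suc (Suc n))) \<le> inverse (real (Suc n))"
      by (rule le_imp_inverse_le) auto
    then have "c - inverse (real (Suc n)) \<le> c - inverse (real (Suc (Suc n)))" by linarith
    then show "A n \<subseteq> A (Suc n)" unfolding A_def by (blast intro: order_trans)
  qed
  have U: "(\<Union>n. A n) = {\<omega>\<in>space M. f \<omega> < c \<and> S \<omega> = s}"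
  proof (rule set_eqI, rule iffI)
    fix \<omega> assume "\<omega> \<in> (\<Union>n. A n)"
    then obtain n where "\<omega> \<in> A n" by auto
    then have w: "\<omega> \<in> space M" "f \<omega> \<le> c - inverse (real (Suc n))" "S \<omega> = s" unfolding A_def by auto
    moreover have "0 < inverse (real (Suc n))" by simp
    ultimately have "f \<omega> < c" by linarith
    then show "\<omega> \<in> {\<omega>\<in>space M. f \<omega> < c \<and> S \<omega> = s}" using w by auto
  next
    fix \<omega> assume w: "\<omega> \<in> {\<omega>\<in>space M. f \<omega> < c \<and> S \<omega> = s}"
    then have "0 < c - f \<omega>" by auto
    then obtain n where "inverse (real (Suc n)) < c - f \<omega>" using reals_Archimedean by blast
    then have "\<omega> \<in> A n" using w unfolding A_def by auto
    then show "\<omega> \<in> (\<Union>n. A n)" by auto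
  qed
  have L1: "(\<lambda>n. G (c - inverse (real (Suc n)))) \<longlonglongrightarrow> measure M {\<omega>\<in>space M. f \<omega> < c \<and> S \<omega> = s}"
  proof -
    have "(\<lambda>n. measure M (A n)) \<longlonglongrightarrow> measure M (\<Union>n. A n)" by (rule finite_Lim_measure_incseq[OF Asets inc])
    then have "(\<lambda>n. measure M (A n)) \<longlonglongrightarrow> measure M {\<omega>\<in>space M. f \<omega> < c \<and> S \<omega> = s}" by (simp only: U)
    then show ?thesis by (simp only: A_def G_def)
  qed
  have "isCont G c" using cont unfolding G_def[abs_def]
    by (simp add: continuous_on_eq_continuous_at)
  moreover have "(\<lambda>n. c - inverse (real (Suc n))) \<longlonglongrightarrow> c"
    using tendsto_diff[OF tendsto_const LIMSEQ_inverse_real_of_nat, of c] by simp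
  ultimately have L2: "(\<lambda>n. G (c - inverse (real (Suc n)))) \<longlonglongrightarrow> G c"
    by (rule isCont_tendsto_compose)
  have eq: "measure M {\<omega>\<in>space M. f \<omega> < c \<and> S \<omega> = s} = G c"
    using LIMSEQ_unique[OF L1 L2] .
  have "{\<omega>\<in>space M. f \<omega> = c \<and> S \<omega> = s} = {\<omega>\<in>space M. f \<omega> \<le> c \<and> S \<omega> = s} - {\<omega>\<in>space M. f \<omega> < c \<and> S \<omega> = s}"
    by auto
  then have "measure M {\<omega>\<in>space M. f \<omega> = c \<and> S \<omega> = s} = G c - measure M {\<omega>\<in>space M. f \<omega> < c \<and> S \<omega> = s}"
  proof -
    have sub: "{\<omega>\<in>space M. f \<omega> < c \<and> S \<omega> = s} \<subseteq> {\<omega>\<in>space M. f \<omega> \<le> c \<and> S \<omega> = s}" by auto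
    show ?thesis unfolding G_def \<open>{\<omega>\<in>space M. f \<omega> = c \<and> S \<omega> = s} = _\<close>
      by (rule finite_measure_Diff[OF le_sets[OF f] lt_sets[OF f] sub])
  qed
  then show ?thesis using eq by simp
qed

lemma m_lim:
  fixes f :: "'a \<Rightarrow> real"
  assumes f: "f \<in> borel_measurable M"
  shows "(\<lambda>n. measure M {\<omega>\<in>space M. S \<omega> = s \<and> \<bar>f \<omega>\<bar> < inverse (real (Suc n))})
     \<longlonglongrightarrow> measure M {\<omega>\<in>space M. f \<omega> = 0 \<and> S \<omega> = s}"
proof -
  define A where "A n = {\<omega>\<in>space M. S \<omega> = s \<and> \<bar>f \<omega>\<bar> < inverse (real (Suc n))}" for n
  have Asets: "range A \<subseteq> sets M" unfolding A_def using abslt_sets[OF f] by auto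
  have dec: "decseq A"
  proof (rule decseq_SucI)
    fix n
    have "inverse (real (Suc (Suc n))) \<le> inverse (real (Suc n))"
      by (rule le_imp_inverse_le) auto
    then show "A (Suc n) \<subseteq> A n" unfolding A_def by (blast intro: less_le_trans)
  qed
  have I: "(\<Inter>n. A n) = {\<omega>\<in>space M. f \<omega> = 0 \<and> S \<omega> = s}"
  proof (rule set_eqI, rule iffI)
    fix \<omega> assume w: "\<omega> \<in> (\<Inter>n. A n)"
    then have w0: "\<omega> \<in> A 0" by auto
    have "f \<omega> = 0"
    proof (rule ccontr)
      assume "f \<omega> \<noteq> 0"
      then have "0 < \<bar>f \<omega>\<bar>" by simp
      then obtain n where "inverse (real (Suc n)) < \<bar>f \<omega>\<bar>" using reals_Archimedean by blast
      moreover have "\<omega> \<in> A n" using w by auto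
      ultimately show False unfolding A_def by auto
    qed
    then show "\<omega> \<in> {\<omega>\<in>space M. f \<omega> = 0 \<and> S \<omega> = s}" using w0 unfolding A_def by auto
  next
    fix \<omega> assume "\<omega> \<in> {\<omega>\<in>space M. f \<omega> = 0 \<and> S \<omega> = s}"
    then show "\<omega> \<in> (\<Inter>n. A n)" unfolding A_def by auto
  qed
  have "(\<lambda>n. measure M (A n)) \<longlonglongrightarrow> measure M (\<Inter>n. A n)" by (rule finite_Lim_measure_decseq[OF Asets dec])
  then have "(\<lambda>n. measure M (A n)) \<longlonglongrightarrow> measure M {\<omega>\<in>space M. f \<omega> = 0 \<and> S \<omega> = s}" by (simp only: I)
  then show ?thesis by (simp only: A_def)
qed

end

lemma max_pert:
  fixes a :: "nat \<Rightarrow> real" and \<sigma> t :: real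
  assumes fin: "finite I" and gi: "gi \<in> I" and amax: "\<forall>j\<in>I. a j \<le> a gi" and sg: "\<bar>\<sigma>\<bar> = 1"
  shows "Max ((\<lambda>j. a j - \<sigma> * (if j = k0 then t else 0)) ` I)
     \<le> a gi - \<sigma> * (if gi = k0 then t else 0)
        + \<bar>t\<bar> * (\<Sum>q\<in>{q\<in>I\<times>I. fst q \<noteq> snd q}. if \<bar>a (fst q) - a (snd q)\<bar> < \<bar>t\<bar> then 1 else 0)"
proof -
  let ?P = "{q\<in>I\<times>I. fst q \<noteq> snd q}"
  let ?T = "(\<Sum>q\<in>?P. if \<bar>a (fst q) - a (snd q)\<bar> < \<bar>t\<bar> then 1 else 0::real)"
  have finP: "finite ?P" by (rule finite_subset[of _ "I\<times>I"]) (auto simp: fin)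
  have T0: "?T \<ge> 0" by (intro sum_nonneg) auto
  have key: "a j - \<sigma> * (if j = k0 then t else 0) \<le> a gi - \<sigma> * (if gi = k0 then t else 0) + \<bar>t\<bar> * ?T"
    if j: "j \<in> I" for j
  proof (cases "j = gi")
    case True
    then show ?thesis using T0 by (simp add: zero_le_mult_iff)
  next
    case False
    have d: "\<bar>\<sigma> * (if j = k0 then t else 0) - \<sigma> * (if gi = k0 then t else 0)\<bar> \<le> \<bar>t\<bar>"
      using False sg by (auto simp: abs_mult)
    show ?thesis
    proof (cases "\<bar>a gi - a j\<bar> < \<bar>t\<bar>")
      case True
      have "(gi, j) \<in> ?P" using gi j False by auto
      then have "(if \<bar>a (fst (gi,j)) - a (snd (gi,j))\<bar> < \<bar>t\<bar> then 1 else 0::real) \<le> ?T"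
        using finP by (intro member_le_sum) auto
      then have "1 \<le> ?T" using True by simp
      then have "\<bar>t\<bar> \<le> \<bar>t\<bar> * ?T" by (simp add: mult_le_cancel_left1)
      have "a j \<le> a gi" using amax j by auto
      then show ?thesis using abs_le_D2[OF d] \<open>\<bar>t\<bar> \<le> \<bar>t\<bar> * ?T\<close> by linarith
    next
      case False
      have "a j \<le> a gi" using amax j by auto
      then have "a j + \<bar>t\<bar> \<le> a gi" using False by (simp add: abs_le_iff)
      moreover have "0 \<le> \<bar>t\<bar> * ?T" using T0 by simp
      ultimately show ?thesis using abs_le_D2[OF d] by linarith
    qed
  qed
  show ?thesis by (subst Max_le_iff) (use fin gi key in auto)
qed

context fsetup begin

lemma tie_zero:
  assumes cont: "\<forall>k\<in>{1..K}. \<forall>j\<in>{1..K}. k \<noteq> j \<longrightarrow> (\<forall>s\<in>{-1,1}.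
        continuous_on UNIV (\<lambda>t. cprob_S M S s (\<lambda>\<omega>. p k (X \<omega>) (S \<omega>) - p j (X \<omega>) (S \<omega>) \<le> t)))"
    and s: "s \<in> {-1,1}" and i: "i \<in> {1..K}" and j: "j \<in> {1..K}" and ij: "i \<noteq> j"
  shows "measure M {\<omega>\<in>space M. (pi_s M S s * p i (X \<omega>) s - real_of_int s * lam i)
      - (pi_s M S s * p j (X \<omega>) s - real_of_int s * lam j) = 0 \<and> S \<omega> = s} = 0"
proof -
  let ?pi = "pi_s M S s"
  have pipos: "?pi > 0" using pi_pos'[OF s] .
  define f where "f \<omega> = p i (X \<omega>) s - p j (X \<omega>) s" for \<omega>
  define c where "c = real_of_int s * (lam i - lam j) / ?pi"
  have fm: "f \<in> borel_measurable M" unfolding f_def[abs_def]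
    using pX_meas[OF i s] pX_meas[OF j s] by (rule borel_measurable_diff)
  have seteq: "{\<omega>\<in>space M. (?pi * p i (X \<omega>) s - real_of_int s * lam i)
      - (?pi * p j (X \<omega>) s - real_of_int s * lam j) = 0 \<and> S \<omega> = s} = {\<omega>\<in>space M. f \<omega> = c \<and> S \<omega> = s}"
  proof -
    have "(?pi * p i (X \<omega>) s - real_of_int s * lam i) - (?pi * p j (X \<omega>) s - real_of_int s * lam j) = 0
        \<longleftrightarrow> f \<omega> = c" for \<omega>
    proof -
      have "(?pi * p i (X \<omega>) s - real_of_int s * lam i) - (?pi * p j (X \<omega>) s - real_of_int s * lam j)
          = ?pi * f \<omega> - real_of_int s * (lam i - lam j)" unfolding f_def by (simp add: algebra_simps)
      moreover have "?pi * f \<omega> - real_of_int s * (lam i - lam j) = 0 \<longleftrightarrow> f \<omega> = c"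
        unfolding c_def using pipos by (auto simp: field_simps)
      ultimately show ?thesis by simp
    qed
    then show ?thesis by auto
  qed
  have c1: "continuous_on UNIV (\<lambda>t. cprob_S M S s (\<lambda>\<omega>. p i (X \<omega>) (S \<omega>) - p j (X \<omega>) (S \<omega>) \<le> t))"
    using cont i j ij s by blast
  have ceq: "cprob_S M S s (\<lambda>\<omega>. p i (X \<omega>) (S \<omega>) - p j (X \<omega>) (S \<omega>) \<le> t)
      = measure M {\<omega>\<in>space M. f \<omega> \<le> t \<and> S \<omega> = s} / ?pi" for t
  proof -
    have "{\<omega>\<in>space M. (p i (X \<omega>) (S \<omega>) - p j (X \<omega>) (S \<omega>) \<le> t) \<and> S \<omega> = s}
        = {\<omega>\<in>space M. f \<omega> \<le> t \<and> S \<omega> = s}" unfolding f_def by auto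
    then show ?thesis unfolding cprob_S_def by simp
  qed
  have "continuous_on UNIV (\<lambda>t. ?pi * (measure M {\<omega>\<in>space M. f \<omega> \<le> t \<and> S \<omega> = s} / ?pi))"
    using c1 unfolding ceq by (rule continuous_on_mult_left)
  then have "continuous_on UNIV (\<lambda>t. measure M {\<omega>\<in>space M. f \<omega> \<le> t \<and> S \<omega> = s})"
    using pipos by simp
  then show ?thesis unfolding seteq by (rule cont_atom[OF fm])
qed

definition Pairs where "Pairs = {q\<in>{1..K}\<times>{1..K}. fst q \<noteq> snd q}"

lemma finite_Pairs: "finite Pairs"
  unfolding Pairs_def by (rule finite_subset[of _ "{1..K}\<times>{1..K}"]) auto

definition DD where "DD lam s q \<omega> = (pi_s M S s * p (fst q) (X \<omega>) s - real_of_int s * lam (fst q))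
      - (pi_s M S s * p (snd q) (X \<omega>) s - real_of_int s * lam (snd q))"

lemma DD_meas: "q \<in> Pairs \<Longrightarrow> s \<in> {-1,1} \<Longrightarrow> DD lam s q \<in> borel_measurable M"
  unfolding DD_def[abs_def] Pairs_def
  by (intro borel_measurable_diff a_meas) auto

lemma eps_lim:
  assumes cont: "\<forall>k\<in>{1..K}. \<forall>j\<in>{1..K}. k \<noteq> j \<longrightarrow> (\<forall>s\<in>{-1,1}.
        continuous_on UNIV (\<lambda>t. cprob_S M S s (\<lambda>\<omega>. p k (X \<omega>) (S \<omega>) - p j (X \<omega>) (S \<omega>) \<le> t)))"
    and s: "s \<in> {-1,1}"
  shows "(\<lambda>n. (\<Sum>q\<in>Pairs. measure M {\<omega>\<in>space M. S \<omega> = s \<and> \<bar>DD lam s q \<omega>\<bar> < inverse (real (Suc n))}) / pi_s M S s)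
     \<longlonglongrightarrow> 0"
proof -
  have "(\<lambda>n. (\<Sum>q\<in>Pairs. measure M {\<omega>\<in>space M. S \<omega> = s \<and> \<bar>DD lam s q \<omega>\<bar> < inverse (real (Suc n))}))
     \<longlonglongrightarrow> (\<Sum>q\<in>Pairs. 0)"
  proof (rule tendsto_sum)
    fix q assume q: "q \<in> Pairs"
    have "measure M {\<omega>\<in>space M. DD lam s q \<omega> = 0 \<and> S \<omega> = s} = 0"
      using tie_zero[OF cont s, of "fst q" "snd q" lam] q unfolding Pairs_def DD_def by auto
    then show "(\<lambda>n. measure M {\<omega>\<in>space M. S \<omega> = s \<and> \<bar>DD lam s q \<omega>\<bar> < inverse (real (Suc n))}) \<longlonglongrightarrow> 0"
      using m_lim[OF DD_meas[OF q s, where lam=lam], where s=s] by simp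
  qed
  then have "(\<lambda>n. (\<Sum>q\<in>Pairs. measure M {\<omega>\<in>space M. S \<omega> = s \<and> \<bar>DD lam s q \<omega>\<bar> < inverse (real (Suc n))}) / pi_s M S s)
     \<longlonglongrightarrow> 0 / pi_s M S s"
    by (intro tendsto_divide tendsto_const) (use pi_pos'[OF s] in auto)
  then show ?thesis by simp
qed


lemma Max_integrable:
  assumes s: "s \<in> {-1,1}"
  shows "integrable M (\<lambda>\<omega>. indicator {\<omega>\<in>space M. S \<omega> = s} \<omega> *
      Max ((\<lambda>k. pi_s M S s * p k (X \<omega>) s - real_of_int s * l k) ` {1..K}))"
proof (rule ind_integrable[OF E_sets, where B="1 + (\<Sum>j\<in>{1..K}. \<bar>l j\<bar>)"])
  show "(\<lambda>\<omega>. Max ((\<lambda>k. pi_s M S s * p k (X \<omega>) s - real_of_int s * l k) ` {1..K})) \<in> borel_measurable M"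
    by (rule borel_measurable_Max) (auto intro: a_meas[OF _ s])
  fix \<omega> assume w: "\<omega> \<in> space M"
  have ne: "(\<lambda>k. pi_s M S s * p k (X \<omega>) s - real_of_int s * l k) ` {1..K} \<noteq> {}" using K by auto
  have "Max ((\<lambda>k. pi_s M S s * p k (X \<omega>) s - real_of_int s * l k) ` {1..K})
      \<in> (\<lambda>k. pi_s M S s * p k (X \<omega>) s - real_of_int s * l k) ` {1..K}"
    by (rule Max_in) (use ne in auto)
  then obtain k where k: "k \<in> {1..K}" and
    e: "Max ((\<lambda>k. pi_s M S s * p k (X \<omega>) s - real_of_int s * l k) ` {1..K}) = pi_s M S s * p k (X \<omega>) s - real_of_int s * l k"
    by auto
  show "\<bar>Max ((\<lambda>k. pi_s M S s * p k (X \<omega>) s - real_of_int s * l k) ` {1..K})\<bar> \<le> 1 + (\<Sum>j\<in>{1..K}. \<bar>l j\<bar>)"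
    unfolding e by (rule a_bnd[OF k s])
qed

lemma pert_bound:
  assumes g: "is_classifier Xs K g" and s: "s \<in> {-1,1}" and k0: "k0 \<in> {1..K}"
    and am: "\<forall>x\<in>Xs. \<forall>s\<in>{-1,1}. \<forall>k\<in>{1..K}.
        pi_s M S s * p k x s - real_of_int s * lam k
          \<le> pi_s M S s * p (g x s) x s - real_of_int s * lam (g x s)"
  shows "cexp_S M S s (\<lambda>\<omega>. Max ((\<lambda>k. pi_s M S s * p k (X \<omega>) s - real_of_int s * (lam(k0 := lam k0 + t)) k) ` {1..K}))
    \<le> cexp_S M S s (\<lambda>\<omega>. pi_s M S s * p (g (X \<omega>) s) (X \<omega>) s - real_of_int s * lam (g (X \<omega>) s))
      - real_of_int s * (t * (Qv g s k0 / pi_s M S s))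
      + \<bar>t\<bar> * ((\<Sum>q\<in>Pairs. measure M {\<omega>\<in>space M. S \<omega> = s \<and> \<bar>DD lam s q \<omega>\<bar> < \<bar>t\<bar>}) / pi_s M S s)"
proof -
  let ?pi = "pi_s M S s"
  let ?E = "{\<omega>\<in>space M. S \<omega> = s}"
  let ?Mx = "\<lambda>\<omega>. Max ((\<lambda>k. ?pi * p k (X \<omega>) s - real_of_int s * (lam(k0 := lam k0 + t)) k) ` {1..K})"
  let ?ag = "\<lambda>\<omega>. ?pi * p (g (X \<omega>) s) (X \<omega>) s - real_of_int s * lam (g (X \<omega>) s)"
  let ?B = "\<lambda>q. {\<omega>\<in>space M. S \<omega> = s \<and> \<bar>DD lam s q \<omega>\<bar> < \<bar>t\<bar>}"
  let ?R = "\<lambda>\<omega>. indicator ?E \<omega> * ?ag \<omega> - (real_of_int s * t) * indicator (Aset g s k0) \<omega>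
       + \<bar>t\<bar> * (\<Sum>q\<in>Pairs. indicator (?B q) \<omega>)"
  have pipos: "?pi > 0" using pi_pos'[OF s] .
  have Bsets: "?B q \<in> sets M" if "q \<in> Pairs" for q using abslt_sets[OF DD_meas[OF that s]] .
  have pw: "indicator ?E \<omega> * ?Mx \<omega> \<le> ?R \<omega>" if w: "\<omega> \<in> space M" for \<omega>
  proof (cases "S \<omega> = s")
    case True
    define a where "a j = ?pi * p j (X \<omega>) s - real_of_int s * lam j" for j
    have x: "X \<omega> \<in> Xs" using X_range w by auto
    have gr: "g (X \<omega>) s \<in> {1..K}" using cls_range[OF g s w] .
    have amax: "\<forall>j\<in>{1..K}. a j \<le> a (g (X \<omega>) s)" unfolding a_def using am x s by blast
    have sg: "\<bar>real_of_int s\<bar> = 1" using s by auto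
    have fe: "(\<lambda>k. ?pi * p k (X \<omega>) s - real_of_int s * (lam(k0 := lam k0 + t)) k)
        = (\<lambda>j. a j - real_of_int s * (if j = k0 then t else 0))"
      by (rule ext) (simp add: a_def algebra_simps)
    have sumeq: "(\<Sum>q\<in>Pairs. indicator (?B q) \<omega>)
        = (\<Sum>q\<in>{q\<in>{1..K}\<times>{1..K}. fst q \<noteq> snd q}. if \<bar>a (fst q) - a (snd q)\<bar> < \<bar>t\<bar> then 1 else 0::real)"
      unfolding Pairs_def by (rule sum.cong) (auto simp: indicator_def DD_def a_def w True)
    have indA: "indicator (Aset g s k0) \<omega> = (if g (X \<omega>) s = k0 then 1 else 0::real)"
      using w True by (auto simp: Aset_def indicator_def)
    have "?Mx \<omega> \<le> a (g (X \<omega>) s) - real_of_int s * (if g (X \<omega>) s = k0 then t else 0)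
        + \<bar>t\<bar> * (\<Sum>q\<in>{q\<in>{1..K}\<times>{1..K}. fst q \<noteq> snd q}. if \<bar>a (fst q) - a (snd q)\<bar> < \<bar>t\<bar> then 1 else 0)"
      unfolding fe by (rule max_pert[OF _ gr amax sg]) simp
    then show ?thesis using w True unfolding sumeq indA
      by (cases "g (X \<omega>) s = k0") (simp_all add: a_def indicator_def)
  next
    case False
    have "indicator (Aset g s k0) \<omega> = (0::real)" using False by (auto simp: Aset_def indicator_def)
    moreover have "(\<Sum>q\<in>Pairs. indicator (?B q) \<omega>) = (0::real)"
      using False by (intro sum.neutral) (auto simp: indicator_def)
    ultimately show ?thesis using False w by (simp add: indicator_def)
  qed
  have iag: "integrable M (\<lambda>\<omega>. indicator ?E \<omega> * ?ag \<omega>)"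
    using cls_integrable[OF g s, of "\<lambda>k \<omega>. ?pi * p k (X \<omega>) s - real_of_int s * lam k" "1 + (\<Sum>j\<in>{1..K}. \<bar>lam j\<bar>)"]
      a_meas[OF _ s] a_bnd[OF _ s] by simp
  have iA: "integrable M (\<lambda>\<omega>. (real_of_int s * t) * indicator (Aset g s k0) \<omega>)"
    using ind_int[OF Aset_sets[OF g s]] by simp
  have iB: "integrable M (\<lambda>\<omega>. \<bar>t\<bar> * (\<Sum>q\<in>Pairs. indicator (?B q) \<omega>))"
  proof -
    have "integrable M (\<lambda>\<omega>. (\<Sum>q\<in>Pairs. indicator (?B q) \<omega>) :: real)"
      by (rule Bochner_Integration.integrable_sum[where f="\<lambda>q. indicator (?B q)"], rule ind_int, rule Bsets)
    then show ?thesis by simp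
  qed
  have IB: "(\<integral>\<omega>. (\<Sum>q\<in>Pairs. indicator (?B q) \<omega>) \<partial>M) = (\<Sum>q\<in>Pairs. measure M (?B q))"
  proof -
    have "(\<integral>\<omega>. (\<Sum>q\<in>Pairs. indicator (?B q) \<omega>) \<partial>M) = (\<Sum>q\<in>Pairs. (\<integral>\<omega>. indicator (?B q) \<omega> \<partial>M) :: real)"
      using ind_int[OF Bsets] by (subst Bochner_Integration.integral_sum) auto
    also have "\<dots> = (\<Sum>q\<in>Pairs. measure M (?B q))"
      by (rule sum.cong[OF refl]) (simp add: Int_absorb2)
    finally show ?thesis .
  qed
  have IA: "(\<integral>\<omega>. indicator (Aset g s k0) \<omega> \<partial>M) = Qv g s k0"
  proof -
    have "Aset g s k0 \<inter> space M = Aset g s k0" unfolding Aset_def by auto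
    then show ?thesis by (simp add: Qv_def)
  qed
  have "(\<integral>\<omega>. indicator ?E \<omega> * ?Mx \<omega> \<partial>M) \<le> (\<integral>\<omega>. ?R \<omega> \<partial>M)"
    by (rule integral_mono[OF Max_integrable[OF s] _ pw])
       (rule Bochner_Integration.integrable_add[OF Bochner_Integration.integrable_diff[OF iag iA] iB])
  also have "(\<integral>\<omega>. ?R \<omega> \<partial>M) = (\<integral>\<omega>. indicator ?E \<omega> * ?ag \<omega> \<partial>M) - (real_of_int s * t) * Qv g s k0
      + \<bar>t\<bar> * (\<Sum>q\<in>Pairs. measure M (?B q))"
    using iag iA iB IA IB
    by (simp add: Bochner_Integration.integral_add Bochner_Integration.integral_diff)
  finally have I: "(\<integral>\<omega>. indicator ?E \<omega> * ?Mx \<omega> \<partial>M) \<le> (\<integral>\<omega>. indicator ?E \<omega> * ?ag \<omega> \<partial>M) - (real_of_int s * t) * Qv g s k0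
      + \<bar>t\<bar> * (\<Sum>q\<in>Pairs. measure M (?B q))" .
  have "(\<integral>\<omega>. indicator ?E \<omega> * ?Mx \<omega> \<partial>M) / ?pi \<le> ((\<integral>\<omega>. indicator ?E \<omega> * ?ag \<omega> \<partial>M) - (real_of_int s * t) * Qv g s k0
      + \<bar>t\<bar> * (\<Sum>q\<in>Pairs. measure M (?B q))) / ?pi"
    by (rule divide_right_mono[OF I]) (use pipos in simp)
  then show ?thesis unfolding cexp_S_def
    by (simp add: add_divide_distrib diff_divide_distrib)
qed

lemma fair_g:
  assumes g: "is_classifier Xs K g"
    and am: "\<forall>x\<in>Xs. \<forall>s\<in>{-1,1}. \<forall>k\<in>{1..K}.
        pi_s M S s * p k x s - real_of_int s * lam k
          \<le> pi_s M S s * p (g x s) x s - real_of_int s * lam (g x s)"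
    and cont: "\<forall>k\<in>{1..K}. \<forall>j\<in>{1..K}. k \<noteq> j \<longrightarrow> (\<forall>s\<in>{-1,1}.
        continuous_on UNIV (\<lambda>t. cprob_S M S s (\<lambda>\<omega>. p k (X \<omega>) (S \<omega>) - p j (X \<omega>) (S \<omega>) \<le> t)))"
    and lmin: "\<forall>l. fair_objective M X S K p lam \<le> fair_objective M X S K p l"
  shows "exactly_fair M X S K g"
  unfolding exactly_fair_def
proof
  fix k0 assume k0: "k0 \<in> {1..K}"
  have s1: "(-1::int) \<in> {-1,1}" and s2: "(1::int) \<in> {-1,1}" by auto
  define D where "D = Qv g 1 k0 / pi_s M S 1 - Qv g (-1) k0 / pi_s M S (-1)"
  define m where "m s r = (\<Sum>q\<in>Pairs. measure M {\<omega>\<in>space M. S \<omega> = s \<and> \<bar>DD lam s q \<omega>\<bar> < r}) / pi_s M S s" for s r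
  have main: "0 \<le> - t * D + \<bar>t\<bar> * (m (-1) \<bar>t\<bar> + m 1 \<bar>t\<bar>)" for t
  proof -
    have F0: "fair_objective M X S K p lam
       = cexp_S M S (-1) (\<lambda>\<omega>. pi_s M S (-1) * p (g (X \<omega>) (-1)) (X \<omega>) (-1) - real_of_int (-1) * lam (g (X \<omega>) (-1)))
       + cexp_S M S 1 (\<lambda>\<omega>. pi_s M S 1 * p (g (X \<omega>) 1) (X \<omega>) 1 - real_of_int 1 * lam (g (X \<omega>) 1))"
      unfolding fair_objective_def using Max_obj[OF g s1 am] Max_obj[OF g s2 am] by simp
    have F1: "fair_objective M X S K p (lam(k0 := lam k0 + t))
       = cexp_S M S (-1) (\<lambda>\<omega>. Max ((\<lambda>k. pi_s M S (-1) * p k (X \<omega>) (-1) - real_of_int (-1) * (lam(k0 := lam k0 + t)) k) ` {1..K}))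
       + cexp_S M S 1 (\<lambda>\<omega>. Max ((\<lambda>k. pi_s M S 1 * p k (X \<omega>) 1 - real_of_int 1 * (lam(k0 := lam k0 + t)) k) ` {1..K}))"
      unfolding fair_objective_def by simp
    have le: "fair_objective M X S K p lam \<le> fair_objective M X S K p (lam(k0 := lam k0 + t))"
      using lmin by blast
    note P1 = pert_bound[OF g s1 k0 am, of t]
    note P2 = pert_bound[OF g s2 k0 am, of t]
    show ?thesis using le P1 P2 unfolding F0 F1 D_def m_def
      by (simp add: algebra_simps)
  qed
  have Dle: "\<bar>D\<bar> \<le> m (-1) (inverse (real (Suc n))) + m 1 (inverse (real (Suc n)))" for n
  proof -
    let ?r = "inverse (real (Suc n))"
    have r: "?r > 0" by simp
    have a: "0 \<le> ?r * ((m (-1) ?r + m 1 ?r) - D)"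
      using main[of ?r] r by (simp add: algebra_simps)
    have b: "0 \<le> ?r * ((m (-1) ?r + m 1 ?r) + D)"
      using main[of "- ?r"] r by (simp add: algebra_simps)
    from a b r have "0 \<le> (m (-1) ?r + m 1 ?r) - D" "0 \<le> (m (-1) ?r + m 1 ?r) + D"
      by (auto simp: zero_le_mult_iff)
    then show ?thesis by linarith
  qed
  have lim: "(\<lambda>n. m (-1) (inverse (real (Suc n))) + m 1 (inverse (real (Suc n)))) \<longlonglongrightarrow> 0"
    using tendsto_add[OF eps_lim[OF cont s1, of lam] eps_lim[OF cont s2, of lam]] unfolding m_def by simp
  have "\<bar>D\<bar> \<le> 0"
    by (rule LIMSEQ_le_const[OF lim]) (use Dle in auto)
  then have "D = 0" by simp
  then show "cprob_S M S 1 (\<lambda>\<omega>. g (X \<omega>) (S \<omega>) = k0) = cprob_S M S (- 1) (\<lambda>\<omega>. g (X \<omega>) (S \<omega>) = k0)"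
    unfolding D_def cprob_S_def Qv_def Aset_def by simp
qed

end

theorem corollary1:
  fixes M :: "'a measure" and X :: "'a \<Rightarrow> real^'d" and S :: "'a \<Rightarrow> int" and Y :: "'a \<Rightarrow> nat"
    and Xs :: "(real^'d) set" and K :: nat
    and p :: "nat \<Rightarrow> real^'d \<Rightarrow> int \<Rightarrow> real"
    and lam_star :: "nat \<Rightarrow> real" and g :: "real^'d \<Rightarrow> int \<Rightarrow> nat"
  assumes M: "prob_space M"
    and K: "K \<ge> 1"
    and X_meas: "X \<in> borel_measurable M"
    and S_meas: "S \<in> M \<rightarrow>\<^sub>M count_space UNIV"
    and Y_meas: "Y \<in> M \<rightarrow>\<^sub>M count_space UNIV"
    and X_range: "\<forall>\<omega>\<in>space M. X \<omega> \<in> Xs"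
    and S_range: "\<forall>\<omega>\<in>space M. S \<omega> \<in> {-1, 1}"
    and Y_range: "\<forall>\<omega>\<in>space M. Y \<omega> \<in> {1..K}"
    and pi_pos: "\<forall>s\<in>{-1,1}. pi_s M S s > 0"
    and p_version: "is_cond_prob_version M X S Y K p"
    and continuity: "\<forall>k\<in>{1..K}. \<forall>j\<in>{1..K}. k \<noteq> j \<longrightarrow> (\<forall>s\<in>{-1,1}.
        continuous_on UNIV (\<lambda>t. cprob_S M S s (\<lambda>\<omega>. p k (X \<omega>) (S \<omega>) - p j (X \<omega>) (S \<omega>) \<le> t)))"
    and lam_min: "\<forall>lam. fair_objective M X S K p lam_star \<le> fair_objective M X S K p lam"
    and g_class: "is_classifier Xs K g"
    and g_argmax: "\<forall>x\<in>Xs. \<forall>s\<in>{-1,1}. \<forall>k\<in>{1..K}.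
        pi_s M S s * p k x s - real_of_int s * lam_star k
          \<le> pi_s M S s * p (g x s) x s - real_of_int s * lam_star (g x s)"
  shows "exactly_fair M X S K g \<and>
         (\<forall>g'. is_classifier Xs K g' \<and> exactly_fair M X S K g' \<longrightarrow> risk M X S Y g \<le> risk M X S Y g')"
  proof -
  interpret fsetup M X S Y Xs K p
    using M K X_meas S_meas Y_meas X_range S_range Y_range pi_pos p_version
    by (simp add: fsetup_def fsetup_axioms_def)
  have f: "exactly_fair M X S K g"
    by (rule fair_g[OF g_class g_argmax continuity lam_min])
  show ?thesis using f optimal[OF g_class f g_argmax] by blast
qed

end
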